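(* Let $\Phi\in\mathcal{O}(M)$, $\epsilon_0>0$, $\mathbf{Y}^{(1)},\dots,\mathbf{Y}^{(S)}\in\mathbb{R}^{M\times N}$, and $\mathbf{P}_n=\Phi(\boldsymbol{\Sigma}_{n,S}+\epsilon_0\mathbf{I})\Phi^\intercal$ for $n=1,\dots,N$. Define $$[\mathbf{G}]_{ab}=\frac1N\sum_{n=1}^N\Big(\frac{[\mathbf{P}_n]_{ab}}{[\mathbf{P}_n]_{aa}}-\delta_{ab}\Big),\qquad[\boldsymbol{\Gamma}]_{ab}=\frac1N\sum_{n=1}^N\frac{[\mathbf{P}_n]_{bb}}{[\mathbf{P}_n]_{aa}},$$ and the tensor $[\tilde{\mathcal{H}}]_{abcd}=\delta_{ac}\delta_{bd}[\boldsymbol{\Gamma}]_{ab}+\delta_{ad}\delta_{bc}-2\delta_{abcd}$. Then the matrix $\mathbf{E}$ defined by $[\mathbf{E}]_{ab}=-[\mathbf{G}^{(\mathrm{anti})}]_{ab}/([\boldsymbol{\Gamma}^{(\mathrm{sym})}]_{ab}-1)$ if $[\boldsymbol{\Gamma}^{(\mathrm{sym})}]_{ab}\neq1$ and $[\mathbf{E}]_{ab}=0$ otherwise belongs to $\Upsilon$ and is a solution of $$\min_{\mathbf{E}\in\Upsilon}\ \langle\mathbf{G},\mathbf{E}\rangle+\tfrac12\langle\mathbf{E}|\tilde{\mathcal{H}}|\mathbf{E}\rangle.$$ Moreover, if $\mathbf{G}^{(\mathrm{anti})}\neq\mathbf{0}$ then $\langle\mathbf{G},\mathbf{E}\rangl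e<0$.
   Context: $\mathcal{O}(M)$ is the group of real $M\times M$ orthogonal matrices; $\Upsilon=\{\mathbf{E}\in\mathbb{R}^{M\times M}:\mathbf{E}^\intercal=-\mathbf{E}\}$. $\boldsymbol{\Sigma}_{n,S}=\frac1S\sum_{s=1}^S\mathbf{y}_n^{(s)}(\mathbf{y}_n^{(s)})^\intercal$, where $\mathbf{y}_n^{(s)}$ is the $n$-th column of $\mathbf{Y}^{(s)}$. $\delta_{ab}$ is the Kronecker delta and $\delta_{abcd}=1$ if $a=b=c=d$, $0$ otherwise. $\langle\mathbf{G},\mathbf{E}\rangle=\sum_{a,b}[\mathbf{G}]_{ab}[\mathbf{E}]_{ab}$, $\langle\mathbf{E}|\tilde{\mathcal{H}}|\mathbf{E}\rangle=\sum_{a,b,c,d}[\tilde{\mathcal{H}}]_{abcd}[\mathbf{E}]_{ab}[\mathbf{E}]_{cd}$. $\mathbf{G}^{(\mathrm{anti})}=(\mathbf{G}-\mathbf{G}^\intercal)/2$ and $\boldsymbol{\Gamma}^{(\mathrm{sym})}=(\boldsymbol{\Gamma}+\boldsymbol{\Gamma}^\intercal)/2$. *)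

theory Defs
  imports "HOL-Analysis.Analysis"
begin

text \<open>Matrices are real^'m^'m (M x M), data matrices Y^(s) :: real^'n^'m (M x N);
  M = CARD('m), N = CARD('n). Row index a is the outer index: A $ a $ b = [A]_ab.\<close>

definition kdelta :: "'a \<Rightarrow> 'a \<Rightarrow> real" where
  "kdelta a b = (if a = b then 1 else 0)"

definition kdelta4 :: "'a \<Rightarrow> 'a \<Rightarrow> 'a \<Rightarrow> 'a \<Rightarrow> real" where
  "kdelta4 a b c d = (if a = b \<and> b = c \<and> c = d then 1 else 0)"

definition outer_prod :: "real^'m \<Rightarrow> real^'m \<Rightarrow> real^'m^'m" where
  "outer_prod x y = (\<chi> i j. x $ i * y $ j)"

definition Sigma_nS :: "nat \<Rightarrow> (nat \<Rightarrow> real^'n^'m) \<Rightarrow> 'n \<Rightarrow> real^'m^'m" where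
  "Sigma_nS S Y n = (1 / real S) *\<^sub>R (\<Sum>s\<in>{1..S}. outer_prod (column n (Y s)) (column n (Y s)))"

definition skew_mats :: "(real^'m^'m) set" where
  "skew_mats = {E. transpose E = - E}"

definition anti_part :: "real^'m^'m \<Rightarrow> real^'m^'m" where
  "anti_part A = (1/2) *\<^sub>R (A - transpose A)"

definition sym_part :: "real^'m^'m \<Rightarrow> real^'m^'m" where
  "sym_part A = (1/2) *\<^sub>R (A + transpose A)"

definition G_mat :: "('n::finite \<Rightarrow> real^'m^'m) \<Rightarrow> real^'m^'m" where
  "G_mat P = (\<chi> a b. (1 / real CARD('n)) *
      (\<Sum>n\<in>UNIV. P n $ a $ b / P n $ a $ a - kdelta a b))"

definition Gamma_mat :: "('n::finite \<Rightarrow> real^'m^'m) \<Rightarrow> real^'m^'m" where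
  "Gamma_mat P = (\<chi> a b. (1 / real CARD('n)) * (\<Sum>n\<in>UNIV. P n $ b $ b / P n $ a $ a))"

definition H_tensor :: "real^'m^'m \<Rightarrow> 'm \<Rightarrow> 'm \<Rightarrow> 'm \<Rightarrow> 'm \<Rightarrow> real" where
  "H_tensor Gam a b c d =
     kdelta a c * kdelta b d * Gam $ a $ b + kdelta a d * kdelta b c - 2 * kdelta4 a b c d"

definition frob_inner :: "real^'m^'m \<Rightarrow> real^'m^'m \<Rightarrow> real" where
  "frob_inner A E = (\<Sum>a\<in>UNIV. \<Sum>b\<in>UNIV. A $ a $ b * E $ a $ b)"

definition tensor_quad :: "('m \<Rightarrow> 'm \<Rightarrow> 'm \<Rightarrow> 'm \<Rightarrow> real) \<Rightarrow> real^'m^'m \<Rightarrow> real" where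
  "tensor_quad H E = (\<Sum>a\<in>UNIV. \<Sum>b\<in>UNIV. \<Sum>c\<in>UNIV. \<Sum>d\<in>UNIV.
      H a b c d * E $ a $ b * E $ c $ d)"

definition E_sol :: "real^'m^'m \<Rightarrow> real^'m^'m \<Rightarrow> real^'m^'m" where
  "E_sol G Gam = (\<chi> a b. if sym_part Gam $ a $ b \<noteq> 1
      then - anti_part G $ a $ b / (sym_part Gam $ a $ b - 1) else 0)"

end

theory Submission
  imports Defs
begin

lemma conj_entry:
  fixes Phi A :: "real^'m^'m"
  shows "(Phi ** A ** transpose Phi) $ a $ b = (\<Sum>i\<in>UNIV. \<Sum>k\<in>UNIV. Phi$a$i * A$i$k * Phi$b$k)"
  apply (simp add: matrix_matrix_mult_def transpose_def sum_distrib_right)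
  apply (subst sum.swap) apply (simp add: mult.assoc)
  done

lemma orth_row: assumes "orthogonal_matrix (Phi::real^'m^'m)"
  shows "(\<Sum>k\<in>UNIV. Phi$a$k * Phi$a$k) = 1"
proof -
  have "Phi ** transpose Phi = mat 1" using assms orthogonal_matrix[of "transpose Phi"] by (simp add: orthogonal_matrix_transpose)
  hence "(Phi ** transpose Phi)$a$a = 1" by (simp add: mat_def)
  thus ?thesis by (simp add: matrix_matrix_mult_def transpose_def)
qed

lemma A_entry:
  "(Sigma_nS S Y n + eps0 *\<^sub>R mat 1) $ i $ k
    = (1/real S) * (\<Sum>s\<in>{1..S}. Y s $ i $ n * Y s $ k $ n) + eps0 * (if i = k then 1 else 0)"
  by (simp add: Sigma_nS_def outer_prod_def column_def mat_def)

lemma quad_nonneg: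
  fixes x :: "'m::finite \<Rightarrow> real"
  shows "0 \<le> (\<Sum>i\<in>UNIV. \<Sum>k\<in>UNIV. x i * (\<Sum>s\<in>T. y s i * y s k) * x k)"
proof -
  have "(\<Sum>s\<in>T. (\<Sum>i\<in>UNIV. x i * y s i) * (\<Sum>k\<in>UNIV. x k * y s k))
      = (\<Sum>s\<in>T. \<Sum>i\<in>UNIV. \<Sum>k\<in>UNIV. x i * y s i * (x k * y s k))"
    by (simp add: sum_product)
  also have "\<dots> = (\<Sum>i\<in>UNIV. \<Sum>s\<in>T. \<Sum>k\<in>UNIV. x i * y s i * (x k * y s k))"
    by (rule sum.swap)
  also have "\<dots> = (\<Sum>i\<in>UNIV. \<Sum>k\<in>UNIV. \<Sum>s\<in>T. x i * y s i * (x k * y s k))"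
    by (rule sum.cong, simp, rule sum.swap)
  also have "\<dots> = (\<Sum>i\<in>UNIV. \<Sum>k\<in>UNIV. x i * (\<Sum>s\<in>T. y s i * y s k) * x k)"
    by (simp add: sum_distrib_left sum_distrib_right algebra_simps)
  finally have e: "(\<Sum>i\<in>UNIV. \<Sum>k\<in>UNIV. x i * (\<Sum>s\<in>T. y s i * y s k) * x k)
     = (\<Sum>s\<in>T. (\<Sum>i\<in>UNIV. x i * y s i) * (\<Sum>k\<in>UNIV. x k * y s k))" by simp
  show ?thesis unfolding e by (intro sum_nonneg) simp
qed

lemma P_entry:
  fixes Phi :: "real^'m^'m" and Y :: "nat \<Rightarrow> real^'n^'m"
  shows "(Phi ** (Sigma_nS S Y n + eps0 *\<^sub>R mat 1) ** transpose Phi) $ a $ b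
    = (1/real S) * (\<Sum>i\<in>UNIV. \<Sum>k\<in>UNIV. Phi$a$i * (\<Sum>s\<in>{1..S}. Y s $ i $ n * Y s $ k $ n) * Phi$b$k)
      + eps0 * (\<Sum>k\<in>UNIV. Phi$a$k * Phi$b$k)"
proof -
  let ?X = "\<lambda>i k. (\<Sum>s\<in>{1..S}. Y s $ i $ n * Y s $ k $ n)"
  have "(Phi ** (Sigma_nS S Y n + eps0 *\<^sub>R mat 1) ** transpose Phi) $ a $ b
     = (\<Sum>i\<in>UNIV. \<Sum>k\<in>UNIV. (1/real S) * (Phi$a$i * ?X i k * Phi$b$k)
           + eps0 * ((if i = k then 1 else 0) * Phi$a$i * Phi$b$k))"
    unfolding conj_entry A_entry by (simp add: algebra_simps)
  also have "\<dots> = (1/real S) * (\<Sum>i\<in>UNIV. \<Sum>k\<in>UNIV. Phi$a$i * ?X i k * Phi$b$k)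
      + eps0 * (\<Sum>i\<in>UNIV. \<Sum>k\<in>UNIV. (if i = k then 1 else 0) * Phi$a$i * Phi$b$k)"
    by (simp add: sum.distrib sum_distrib_left)
  also have "(\<Sum>i\<in>UNIV. \<Sum>k\<in>UNIV. (if i = k then 1 else 0) * Phi$a$i * Phi$b$k)
      = (\<Sum>k\<in>UNIV. Phi$a$k * Phi$b$k)"
  proof (rule sum.cong[OF refl])
    fix i
    have "(\<Sum>k\<in>UNIV. (if i = k then 1 else 0) * Phi$a$i * Phi$b$k) = (\<Sum>k\<in>UNIV. if i = k then Phi$a$i * Phi$b$k else 0)"
      by (rule sum.cong) auto
    then show "(\<Sum>k\<in>UNIV. (if i = k then 1 else 0) * Phi$a$i * Phi$b$k) = Phi$a$i * Phi$b$i" by simp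
  qed
  finally show ?thesis .
qed

lemma P_props:
  fixes Phi :: "real^'m^'m" and Y :: "nat \<Rightarrow> real^'n^'m" and S :: nat and n :: 'n
  assumes "orthogonal_matrix Phi" "eps0 > 0"
  defines "Q \<equiv> Phi ** (Sigma_nS S Y n + eps0 *\<^sub>R mat 1) ** transpose Phi"
  shows "Q $ a $ a > 0" "Q $ a $ b = Q $ b $ a"
proof -
  have "0 \<le> (\<Sum>i\<in>UNIV. \<Sum>k\<in>UNIV. Phi$a$i * (\<Sum>s\<in>{1..S}. Y s $ i $ n * Y s $ k $ n) * Phi$a$k)"
    by (rule quad_nonneg)
  then show "Q $ a $ a > 0" unfolding Q_def P_entry orth_row[OF assms(1)] using assms(2)
    by (simp add: add_nonneg_pos)
  have "(\<Sum>i\<in>UNIV. \<Sum>k\<in>UNIV. Phi$a$i * (\<Sum>s\<in>{1..S}. Y s $ i $ n * Y s $ k $ n) * Phi$b$k)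
     = (\<Sum>i\<in>UNIV. \<Sum>k\<in>UNIV. Phi$b$i * (\<Sum>s\<in>{1..S}. Y s $ i $ n * Y s $ k $ n) * Phi$a$k)"
    apply (subst sum.swap) by (simp add: algebra_simps)
  then show "Q $ a $ b = Q $ b $ a" unfolding Q_def P_entry by (simp add: mult.commute)
qed

lemma anti_entry: "anti_part A $ a $ b = (A$a$b - A$b$a)/2"
  by (simp add: anti_part_def transpose_def)
lemma sym_entry: "sym_part A $ a $ b = (A$a$b + A$b$a)/2"
  by (simp add: sym_part_def transpose_def)

lemma Gam_sym_eq:
  fixes P :: "'n::finite \<Rightarrow> real^'m^'m"
  assumes pos: "\<And>n a. P n $ a $ a > 0"
  shows "sym_part (Gamma_mat P) $ a $ b - 1
     = (1 / real CARD('n)) * (\<Sum>n\<in>UNIV. (P n $a$a - P n $b$b)^2 / (2 * P n $a$a * P n $b$b))"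
proof -
  have N: "real CARD('n) > 0" by simp
  have "sym_part (Gamma_mat P) $ a $ b - 1
     = (1 / real CARD('n)) * (\<Sum>n\<in>UNIV. (P n $ b $ b / P n $ a $ a + P n $ a $ a / P n $ b $ b)/2)
       - (1 / real CARD('n)) * (\<Sum>n\<in>(UNIV::'n set). 1)"
    using N by (simp add: sym_entry Gamma_mat_def sum.distrib sum_divide_distrib[symmetric] field_simps)
  also have "\<dots> = (1 / real CARD('n)) * (\<Sum>n\<in>UNIV. (P n $ b $ b / P n $ a $ a + P n $ a $ a / P n $ b $ b)/2 - 1)"
    by (simp add: sum_subtractf right_diff_distrib)
  also have "\<dots> = (1 / real CARD('n)) * (\<Sum>n\<in>UNIV. (P n $a$a - P n $b$b)^2 / (2 * P n $a$a * P n $b$b))"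
  proof -
    have "\<And>n. (P n $ b $ b / P n $ a $ a + P n $ a $ a / P n $ b $ b)/2 - 1
          = (P n $a$a - P n $b$b)^2 / (2 * P n $a$a * P n $b$b)"
    proof -
      fix n
      have x: "P n $a$a > 0" "P n $b$b > 0" using pos by auto
      then show "(P n $ b $ b / P n $ a $ a + P n $ a $ a / P n $ b $ b)/2 - 1
          = (P n $a$a - P n $b$b)^2 / (2 * P n $a$a * P n $b$b)"
        by (simp add: field_simps power2_eq_square)
    qed
    then show ?thesis by simp
  qed
  finally show ?thesis .
qed

lemma Gam_props:
  fixes P :: "'n::finite \<Rightarrow> real^'m^'m"
  assumes pos: "\<And>n a. P n $ a $ a > 0" and sym: "\<And>n a b. P n $ a $ b = P n $ b $ a"
  shows "sym_part (Gamma_mat P) $ a $ b \<ge> 1"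
    and "sym_part (Gamma_mat P) $ a $ b = 1 \<Longrightarrow> anti_part (G_mat P) $ a $ b = 0"
proof -
  have nn: "\<And>n. 0 \<le> (P n $a$a - P n $b$b)^2 / (2 * P n $a$a * P n $b$b)"
    using pos by (simp add: less_imp_le)
  have "0 \<le> (1 / real CARD('n)) * (\<Sum>n\<in>UNIV. (P n $a$a - P n $b$b)^2 / (2 * P n $a$a * P n $b$b))"
    using nn by (simp add: sum_nonneg)
  then show "sym_part (Gamma_mat P) $ a $ b \<ge> 1" using Gam_sym_eq[where P=P and a=a and b=b, OF pos] by simp
  assume "sym_part (Gamma_mat P) $ a $ b = 1"
  then have "(\<Sum>n\<in>UNIV. (P n $a$a - P n $b$b)^2 / (2 * P n $a$a * P n $b$b)) = 0"
    using Gam_sym_eq[where P=P and a=a and b=b, OF pos] by simp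
  then have "\<forall>n\<in>UNIV. (P n $a$a - P n $b$b)^2 / (2 * P n $a$a * P n $b$b) = 0"
    using nn by (subst sum_nonneg_eq_0_iff[symmetric]) auto
  then have eq: "\<And>n. P n $a$a = P n $b$b" using pos
    by (metis (no_types) divide_eq_0_iff mult_pos_pos zero_less_numeral less_irrefl power_eq_0_iff right_minus_eq UNIV_I)
  have "G_mat P $ a $ b = G_mat P $ b $ a"
    unfolding G_mat_def using eq sym by (simp add: kdelta_def eq_commute)
  then show "anti_part (G_mat P) $ a $ b = 0" by (simp add: anti_entry)
qed

lemma swap_skew_sum:
  fixes F :: "'m::finite \<Rightarrow> 'm \<Rightarrow> real"
  shows "(\<Sum>a\<in>UNIV. \<Sum>b\<in>UNIV. F b a) = (\<Sum>a\<in>UNIV. \<Sum>b\<in>UNIV. F a b)"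
  by (rule sum.swap)

lemma sum_kd: "(\<Sum>c\<in>UNIV. kdelta (a::'m::finite) c * g c) = (g a :: real)"
proof -
  have "(\<Sum>c\<in>UNIV. kdelta a c * g c) = (\<Sum>c\<in>UNIV. if c = a then g c else 0)"
    by (rule sum.cong) (auto simp: kdelta_def)
  then show ?thesis by simp
qed

lemma sum_kd2: "(\<Sum>c\<in>UNIV. \<Sum>d\<in>UNIV. kdelta (a::'m::finite) c * (kdelta (b::'m) d * f c d)) = (f a b :: real)"
  by (simp add: sum_distrib_left[symmetric] sum_kd)
lemma sum_kd3: "(\<Sum>c\<in>UNIV. \<Sum>d\<in>UNIV. kdelta (a::'m::finite) d * (kdelta (b::'m) c * f c d)) = (f b a :: real)"
proof -
  have "(\<Sum>c\<in>UNIV. \<Sum>d\<in>UNIV. kdelta a d * (kdelta b c * f c d)) = (\<Sum>c\<in>UNIV. kdelta b c * (\<Sum>d\<in>UNIV. kdelta a d * f c d))"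
    by (simp add: sum_distrib_left mult.left_commute)
  then show ?thesis by (simp add: sum_kd)
qed
lemma sum_kd4: "(\<Sum>c\<in>UNIV. \<Sum>d\<in>UNIV. kdelta (a::'m::finite) b * (kdelta a c * (kdelta a d * f c d))) = kdelta a b * (f a a :: real)"
  by (simp add: sum_distrib_left[symmetric] sum_kd)

lemma H_inner:
  fixes E Gam :: "real^'m^'m"
  shows "(\<Sum>c\<in>UNIV. \<Sum>d\<in>UNIV. H_tensor Gam a b c d * E $ a $ b * E $ c $ d)
    = Gam$a$b * (E$a$b)^2 + E$a$b * E$b$a - 2 * (if a = b then (E$a$b)^2 else 0)"
proof -
  have e: "\<And>c d. H_tensor Gam a b c d * E $ a $ b * E $ c $ d
     = kdelta a c * (kdelta b d * (Gam$a$b*E$a$b*E$c$d)) + kdelta a d * (kdelta b c * (E$a$b*E$c$d))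
       - kdelta a b * (kdelta a c * (kdelta a d * (2*E$a$b*E$c$d)))"
    by (simp add: H_tensor_def kdelta_def kdelta4_def algebra_simps)
  show ?thesis
    unfolding e sum_subtractf sum.distrib sum_kd2 sum_kd3[where f="\<lambda>c d. E$a$b*E$c$d"] sum_kd4
    by (simp add: kdelta_def power2_eq_square)
qed

lemma obj_eq:
  fixes E G Gam :: "real^'m^'m"
  assumes sk: "transpose E = - E"
  shows "frob_inner G E + 1/2 * tensor_quad (H_tensor Gam) E
    = (\<Sum>a\<in>UNIV. \<Sum>b\<in>UNIV. anti_part G $a$b * E$a$b + 1/2 * (sym_part Gam $a$b - 1) * (E$a$b)^2)"
proof -
  have skw: "\<And>a b. E$b$a = - E$a$b"
  proof -
    fix a b
    have "transpose E $a$b = (-E)$a$b" using sk by simp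
    then show "E$b$a = - E$a$b" by (simp add: transpose_def)
  qed
  have d0: "\<And>a. E$a$a = 0" using skw by (metis neg_equal_zero)
  have m0: "\<And>a b. (if a = b then (E$a$b)^2 else 0) = 0" using d0 by auto
  have m1: "\<And>a b. G$a$b * E$b$a = -(G$a$b*E$a$b)" by (metis skw mult_minus_right)
  have m2: "\<And>a b. (E$b$a)^2 = (E$a$b)^2" by (metis skw power2_minus)
  have m3: "\<And>a b. E$a$b * E$b$a = - ((E$a$b)^2)" by (metis skw mult_minus_right power2_eq_square)
  have f1: "(\<Sum>a\<in>UNIV. \<Sum>b\<in>UNIV. G$b$a * E$a$b) = - frob_inner G E"
  proof -
    have "(\<Sum>a\<in>UNIV. \<Sum>b\<in>UNIV. G$b$a * E$a$b) = (\<Sum>a\<in>UNIV. \<Sum>b\<in>UNIV. G$a$b * E$b$a)"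
      by (rule swap_skew_sum[where F="\<lambda>b a. G$b$a * E$a$b"])
    also have "\<dots> = - frob_inner G E" by (simp add: m1 frob_inner_def sum_negf)
    finally show ?thesis .
  qed
  have fr: "frob_inner G E = (\<Sum>a\<in>UNIV. \<Sum>b\<in>UNIV. anti_part G $a$b * E$a$b)"
  proof -
    have "(\<Sum>a\<in>UNIV. \<Sum>b\<in>UNIV. anti_part G $a$b * E$a$b)
      = 1/2 * frob_inner G E - 1/2 * (\<Sum>a\<in>UNIV. \<Sum>b\<in>UNIV. G$b$a * E$a$b)"
      by (simp add: anti_entry frob_inner_def sum_distrib_left sum_subtractf[symmetric] algebra_simps diff_divide_distrib)
    then show ?thesis using f1 by simp
  qed
  have g1: "(\<Sum>a\<in>UNIV. \<Sum>b\<in>UNIV. Gam$b$a * (E$a$b)^2) = (\<Sum>a\<in>UNIV. \<Sum>b\<in>UNIV. Gam$a$b * (E$a$b)^2)"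
  proof -
    have "(\<Sum>a\<in>UNIV. \<Sum>b\<in>UNIV. Gam$b$a * (E$a$b)^2) = (\<Sum>a\<in>UNIV. \<Sum>b\<in>UNIV. Gam$a$b * (E$b$a)^2)"
      by (rule swap_skew_sum[where F="\<lambda>b a. Gam$b$a * (E$a$b)^2"])
    also have "\<dots> = (\<Sum>a\<in>UNIV. \<Sum>b\<in>UNIV. Gam$a$b * (E$a$b)^2)" by (simp add: m2)
    finally show ?thesis .
  qed
  have tq: "tensor_quad (H_tensor Gam) E = (\<Sum>a\<in>UNIV. \<Sum>b\<in>UNIV. Gam$a$b * (E$a$b)^2 - (E$a$b)^2)"
    unfolding tensor_quad_def using H_inner[of Gam a b E for a b]
    by (simp add: H_inner m3 m0)
  have "1/2 * tensor_quad (H_tensor Gam) E = (\<Sum>a\<in>UNIV. \<Sum>b\<in>UNIV. 1/2 * (sym_part Gam $a$b - 1) * (E$a$b)^2)"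
  proof -
    have "(\<Sum>a\<in>UNIV. \<Sum>b\<in>UNIV. 1/2 * (sym_part Gam $a$b - 1) * (E$a$b)^2)
       = (\<Sum>a\<in>UNIV. \<Sum>b\<in>UNIV. 1/4 * (Gam$a$b * (E$a$b)^2) + 1/4 * (Gam$b$a * (E$a$b)^2) - 1/2 * (E$a$b)^2)"
      by (intro sum.cong refl) (simp add: sym_entry field_simps)
    also have "\<dots> = 1/4 * (\<Sum>a\<in>UNIV. \<Sum>b\<in>UNIV. Gam$a$b * (E$a$b)^2) + 1/4 * (\<Sum>a\<in>UNIV. \<Sum>b\<in>UNIV. Gam$b$a * (E$a$b)^2)
        - 1/2 * (\<Sum>a\<in>UNIV. \<Sum>b\<in>UNIV. (E$a$b)^2)"
      by (simp only: sum.distrib sum_subtractf sum_distrib_left)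
    also have "\<dots> = 1/2 * ((\<Sum>a\<in>UNIV. \<Sum>b\<in>UNIV. Gam$a$b * (E$a$b)^2) - (\<Sum>a\<in>UNIV. \<Sum>b\<in>UNIV. (E$a$b)^2))"
      unfolding g1 by simp
    also have "\<dots> = 1/2 * tensor_quad (H_tensor Gam) E"
      unfolding tq by (simp only: sum_subtractf)
    finally show ?thesis by simp
  qed
  then show ?thesis using fr by (simp add: sum.distrib)
qed

lemma frob_skew:
  fixes E G :: "real^'m^'m"
  assumes sk: "transpose E = - E"
  shows "frob_inner G E = (\<Sum>a\<in>UNIV. \<Sum>b\<in>UNIV. anti_part G $a$b * E$a$b)"
proof -
  have "frob_inner G E + 1/2 * tensor_quad (H_tensor (0::real^'m^'m)) E
    = (\<Sum>a\<in>UNIV. \<Sum>b\<in>UNIV. anti_part G $a$b * E$a$b + 1/2 * (sym_part (0::real^'m^'m) $a$b - 1) * (E$a$b)^2)"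
    by (rule obj_eq[OF sk])
  moreover have "frob_inner 0 E + 1/2 * tensor_quad (H_tensor (0::real^'m^'m)) E
    = (\<Sum>a\<in>UNIV. \<Sum>b\<in>UNIV. anti_part 0 $a$b * E$a$b + 1/2 * (sym_part (0::real^'m^'m) $a$b - 1) * (E$a$b)^2)"
    by (rule obj_eq[OF sk])
  ultimately show ?thesis
    by (simp add: frob_inner_def anti_entry sum.distrib)
qed

lemma pointwise:
  fixes g s x :: real
  assumes "s \<ge> 1" "s = 1 \<Longrightarrow> g = 0"
  shows "g * (if s \<noteq> 1 then - g / (s - 1) else 0) + 1/2 * (s - 1) * (if s \<noteq> 1 then - g / (s - 1) else 0)^2
       \<le> g * x + 1/2 * (s - 1) * x^2"
proof (cases "s = 1")
  case True then show ?thesis using assms by simp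
next
  case False
  then have c: "s - 1 > 0" using assms by simp
  define c where "c = s - 1"
  have c': "c > 0" using c c_def by simp
  have "0 \<le> (c * x + g)^2 / (2 * c)" using c' by simp
  moreover have "g * x + 1/2 * c * x^2 - (g * (- g / c) + 1/2 * c * (- g / c)^2)
      = (c * x + g)^2 / (2 * c)"
    using c' by (simp add: field_simps power2_eq_square)
  ultimately show ?thesis using False unfolding c_def by simp
qed

lemma sum_neg_ex:
  fixes f :: "'a \<Rightarrow> real"
  assumes "finite A" "\<And>x. x \<in> A \<Longrightarrow> f x \<le> 0" "zz \<in> A" "f zz < 0"
  shows "sum f A < 0"
proof -
  have "sum f A < sum (\<lambda>x. 0) A"
    by (rule sum_strict_mono_ex1) (use assms in auto)
  then show ?thesis by simp
qed

lemma main_alg: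
  fixes P :: "'n::finite \<Rightarrow> real^'m^'m"
  assumes pos: "\<And>n a. P n $ a $ a > 0" and sym: "\<And>n a b. P n $ a $ b = P n $ b $ a"
  shows "E_sol (G_mat P) (Gamma_mat P) \<in> skew_mats
    \<and> (\<forall>E\<in>skew_mats.
          frob_inner (G_mat P) (E_sol (G_mat P) (Gamma_mat P))
            + 1/2 * tensor_quad (H_tensor (Gamma_mat P)) (E_sol (G_mat P) (Gamma_mat P))
          \<le> frob_inner (G_mat P) E + 1/2 * tensor_quad (H_tensor (Gamma_mat P)) E)
    \<and> (anti_part (G_mat P) \<noteq> 0 \<longrightarrow> frob_inner (G_mat P) (E_sol (G_mat P) (Gamma_mat P)) < 0)"
proof -
  define G where "G = G_mat P"
  define Gam where "Gam = Gamma_mat P"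
  define Es where "Es = E_sol G Gam"
  have ge: "\<And>a b. sym_part Gam $ a $ b \<ge> 1" unfolding Gam_def by (rule Gam_props(1)[OF pos sym])
  have z: "\<And>a b. sym_part Gam $ a $ b = 1 \<Longrightarrow> anti_part G $ a $ b = 0"
    unfolding Gam_def G_def by (rule Gam_props(2)[OF pos sym])
  have Es_e: "\<And>a b. Es $a$b = (if sym_part Gam $ a $ b \<noteq> 1
      then - anti_part G $ a $ b / (sym_part Gam $ a $ b - 1) else 0)"
    by (simp add: Es_def E_sol_def)
  have sk: "transpose Es = - Es"
  proof -
    have "\<And>a b. Es$b$a = - Es$a$b"
    proof -
      fix a b
      have s: "sym_part Gam $b$a = sym_part Gam $a$b" by (simp add: sym_entry add.commute)
      have n: "anti_part G $b$a = - anti_part G $a$b" unfolding anti_entry minus_divide_left minus_diff_eq ..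
      show "Es$b$a = - Es$a$b" unfolding Es_e s n by simp
    qed
    note EQ = this
    have "\<And>a b. transpose Es $a$b = (-Es)$a$b"
    proof -
      fix a b
      have "transpose Es $a$b = Es$b$a" by (simp add: transpose_def)
      also have "\<dots> = - Es$a$b" by (rule EQ)
      also have "\<dots> = (-Es)$a$b" by simp
      finally show "transpose Es $a$b = (-Es)$a$b" .
    qed
    then show ?thesis by (simp add: vec_eq_iff)
  qed
  have part2: "\<forall>E\<in>skew_mats. frob_inner G Es + 1/2 * tensor_quad (H_tensor Gam) Es
          \<le> frob_inner G E + 1/2 * tensor_quad (H_tensor Gam) E"
  proof
    fix E :: "real^'m^'m" assume "E \<in> skew_mats"
    then have skE: "transpose E = - E" by (simp add: skew_mats_def)
    show "frob_inner G Es + 1/2 * tensor_quad (H_tensor Gam) Es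
          \<le> frob_inner G E + 1/2 * tensor_quad (H_tensor Gam) E"
      unfolding obj_eq[OF sk] obj_eq[OF skE]
      by (intro sum_mono) (unfold Es_e, rule pointwise[OF ge z])
  qed
  have part3: "anti_part G \<noteq> 0 \<longrightarrow> frob_inner G Es < 0"
  proof
    assume "anti_part G \<noteq> 0"
    then obtain a0 b0 where ab: "anti_part G $ a0 $ b0 \<noteq> 0" by (auto simp: vec_eq_iff)
    have t: "\<And>a b. anti_part G $a$b * Es$a$b = (if sym_part Gam $ a $ b \<noteq> 1
      then - ((anti_part G $ a $ b)^2) / (sym_part Gam $ a $ b - 1) else 0)"
      unfolding Es_e by (simp add: power2_eq_square)
    have le: "\<And>a b. anti_part G $a$b * Es$a$b \<le> 0"
      unfolding t using ge by (simp add: divide_nonneg_pos)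
    have s1: "sym_part Gam $ a0 $ b0 \<noteq> 1" using z ab by blast
    have lt: "anti_part G $a0$b0 * Es$a0$b0 < 0"
      unfolding t using ge[of a0 b0] s1 ab by (simp add: divide_pos_pos)
    have r: "(\<Sum>b\<in>UNIV. anti_part G $a0$b * Es$a0$b) < 0"
      by (rule sum_neg_ex[where zz=b0]) (simp_all add: le lt)
    have "(\<Sum>a\<in>UNIV. \<Sum>b\<in>UNIV. anti_part G $a$b * Es$a$b) < 0"
      by (rule sum_neg_ex[where zz=a0]) (simp_all add: le r sum_nonpos)
    then show "frob_inner G Es < 0" unfolding frob_skew[OF sk] .
  qed
  have p1: "Es \<in> skew_mats" unfolding skew_mats_def using sk by (rule CollectI)
  show ?thesis unfolding G_def[symmetric] Gam_def[symmetric] Es_def[symmetric]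
    by (intro conjI p1 part2 part3)
qed

theorem proposition4:
  fixes Phi :: "real^'m^'m" and eps0 :: real and S :: nat
    and Y :: "nat \<Rightarrow> real^'n^'m" and P :: "'n \<Rightarrow> real^'m^'m"
  assumes "orthogonal_matrix Phi"
    and "eps0 > 0"
    and "S \<ge> 1"
    and "\<And>n. P n = Phi ** (Sigma_nS S Y n + eps0 *\<^sub>R mat 1) ** transpose Phi"
  shows "E_sol (G_mat P) (Gamma_mat P) \<in> skew_mats
    \<and> (\<forall>E\<in>skew_mats.
          frob_inner (G_mat P) (E_sol (G_mat P) (Gamma_mat P))
            + 1/2 * tensor_quad (H_tensor (Gamma_mat P)) (E_sol (G_mat P) (Gamma_mat P))
          \<le> frob_inner (G_mat P) E + 1/2 * tensor_quad (H_tensor (Gamma_mat P)) E)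
    \<and> (anti_part (G_mat P) \<noteq> 0 \<longrightarrow> frob_inner (G_mat P) (E_sol (G_mat P) (Gamma_mat P)) < 0)"
proof -
  have pos: "\<And>n a. P n $ a $ a > 0" using P_props(1)[OF assms(1,2)] assms(4) by simp
  have sym: "\<And>n a b. P n $ a $ b = P n $ b $ a" using P_props(2)[OF assms(1,2)] assms(4) by simp
  show ?thesis by (rule main_alg[OF pos sym])
qed

end
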